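(* Let $X$ be an extensible marked Dynkin diagram and $\lambda,\mu,\nu\in\mathcal H_2^+$. Suppose $c_{\lambda\mu}^{\,\nu}(n)>0$ for infinitely many values of $n$ greater than the lengths of each of $\lambda,\mu,\nu$. Then $|\lambda|_X+|\mu|_X=|\nu|_X$.
   Context: A marked Dynkin diagram $X$ has nodes $1,\dots,d$ with node $d$ distinguished and symmetrizable generalized Cartan matrix $C(X)$. For $n\ge d$, $X_n$ is obtained by attaching a simply-laced chain of new nodes $d+1,\dots,n$ to node $d$ (so $C(X_n)$ has $C(X)$ as upper-left block, $2$ on the remaining diagonal, $-1$ in positions $(i,i+1),(i+1,i)$ for $d\le i<n$, $0$ elsewhere); $X_{d-1}$ is $X$ with node $d$ deleted. $\det(Y)$ is the determinant of the generalized Cartan matrix of $Y$. The sequence $\det(X_n)$, $n\ge d$, is arithmetic with common difference $\Delta$; $X$ is extensible if $\Delta\ne0$, $\det(X)\ne0$ and $\gcd(\Delta,\det X)=1$. $\mathfrak g(X_n)$ is the Kac–Moody algebra with Cartan matrix $C(X_n)$, fundamental weights $\omega_i^{(n)}$, $\overline{\omega}_i^{(n)}=\omega_{n-i+1}^{(n)}$. $\mathcal H_1$ is the set of finitely supported integer sequences, $\mathcal H_1^+$ those with nonnegative entries, $\ell(x)=\max\{i:x_i\ne0\}$; $\mathcal H_2=\mathcal H_1\times\mathcal H_1$, $\mathcal H_2^+=\mathcal H_1^+\times\mathcal H_1^+$. For $\lambda=(x,y)$, its length is $\ell(\lambda,X)=\ell(y)+\max(d,\ell(x))$ and for $n\ge\ell(\lambda,X)$,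 $\lambda^{(n)}=\sum_ix_i\omega_i^{(n)}+\sum_iy_i\overline{\omega}_i^{(n)}$. $c_{\lambda\mu}^{\,\nu}(n)$ is the multiplicity of $L(\nu^{(n)})$ in $L(\lambda^{(n)})\otimes L(\mu^{(n)})$ (irreducible integrable highest weight $\mathfrak g(X_n)$-modules). Integers $a_i$: for $1\le i\le d$, $a_i=\det(X)(C(X)^{-1})_{d\,i}$; for $i>d$, $a_i=\det(X_{i-1})$. The number of boxes of $\lambda=(x,y)\in\mathcal H_2$ is $|\lambda|_X=\sum_i a_ix_i-\Delta\sum_i i\,y_i$. *)

theory Defs
  imports "Jordan_Normal_Form.DL_Rank" "Jordan_Normal_Form.Gauss_Jordan_Elimination"
begin

text \<open>A marked Dynkin diagram X with nodes 1..d (node d distinguished) is given by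
  its generalized Cartan matrix A, with entries A i j for i, j in {1..d}.\<close>

definition gcm :: "(nat \<Rightarrow> nat \<Rightarrow> int) \<Rightarrow> nat \<Rightarrow> bool" where
  "gcm A d \<longleftrightarrow> (\<forall>i\<in>{1..d}. A i i = 2) \<and>
     (\<forall>i\<in>{1..d}. \<forall>j\<in>{1..d}. i \<noteq> j \<longrightarrow> A i j \<le> 0) \<and>
     (\<forall>i\<in>{1..d}. \<forall>j\<in>{1..d}. A i j = 0 \<longleftrightarrow> A j i = 0)"

definition symmetrizable :: "(nat \<Rightarrow> nat \<Rightarrow> int) \<Rightarrow> nat \<Rightarrow> bool" where
  "symmetrizable A d \<longleftrightarrow> (\<exists>D :: nat \<Rightarrow> rat. (\<forall>i\<in>{1..d}. D i > 0) \<and>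
     (\<forall>i\<in>{1..d}. \<forall>j\<in>{1..d}. D i * of_int (A i j) = D j * of_int (A j i)))"

definition marked_dynkin :: "(nat \<Rightarrow> nat \<Rightarrow> int) \<Rightarrow> nat \<Rightarrow> bool" where
  "marked_dynkin A d \<longleftrightarrow> d \<ge> 1 \<and> gcm A d \<and> symmetrizable A d"

text \<open>Entries (1-indexed) of the Cartan matrix C(X_n), n \<ge> d.\<close>
definition cartanX :: "(nat \<Rightarrow> nat \<Rightarrow> int) \<Rightarrow> nat \<Rightarrow> nat \<Rightarrow> nat \<Rightarrow> int" where
  "cartanX A d i j =
     (if i \<le> d \<and> j \<le> d then A i j
      else if i = j then 2
      else if (i + 1 = j \<or> j + 1 = i) then -1
      else 0)"

text \<open>C(X_n) as an n x n integer matrix (0-indexed in JNF).\<close>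
definition cmat :: "(nat \<Rightarrow> nat \<Rightarrow> int) \<Rightarrow> nat \<Rightarrow> nat \<Rightarrow> int mat" where
  "cmat A d n = mat n n (\<lambda>(i, j). cartanX A d (i + 1) (j + 1))"

definition detX :: "(nat \<Rightarrow> nat \<Rightarrow> int) \<Rightarrow> nat \<Rightarrow> nat \<Rightarrow> int" where
  "detX A d n = det (cmat A d n)"

definition Delta :: "(nat \<Rightarrow> nat \<Rightarrow> int) \<Rightarrow> nat \<Rightarrow> int" where
  "Delta A d = detX A d (d + 1) - detX A d d"

definition extensible :: "(nat \<Rightarrow> nat \<Rightarrow> int) \<Rightarrow> nat \<Rightarrow> bool" where
  "extensible A d \<longleftrightarrow> marked_dynkin A d \<and> Delta A d \<noteq> 0 \<and> detX A d d \<noteq> 0 \<and>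
     gcd (Delta A d) (detX A d d) = 1"

text \<open>Sequences x_1, x_2, ... are functions nat => int with x 0 = 0 (unused index).\<close>
definition H1 :: "(nat \<Rightarrow> int) set" where
  "H1 = {x. finite {i. x i \<noteq> 0} \<and> x 0 = 0}"

definition H1pos :: "(nat \<Rightarrow> int) set" where
  "H1pos = {x. x \<in> H1 \<and> (\<forall>i. x i \<ge> 0)}"

definition H2pos :: "((nat \<Rightarrow> int) \<times> (nat \<Rightarrow> int)) set" where
  "H2pos = H1pos \<times> H1pos"

definition len1 :: "(nat \<Rightarrow> int) \<Rightarrow> nat" where
  "len1 x = Max (insert 0 {i. x i \<noteq> 0})"

definition lenX :: "nat \<Rightarrow> (nat \<Rightarrow> int) \<times> (nat \<Rightarrow> int) \<Rightarrow> nat" where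
  "lenX d lam = len1 (snd lam) + max d (len1 (fst lam))"

text \<open>Dynkin labels of lambda^(n) = sum x_i omega_i + sum y_i omega_{n-i+1}:
  the coefficient of omega_i (i in 1..n) is x_i + y_{n+1-i}.\<close>
definition labels :: "nat \<Rightarrow> (nat \<Rightarrow> int) \<times> (nat \<Rightarrow> int) \<Rightarrow> nat \<Rightarrow> int" where
  "labels n lam i = fst lam i + snd lam (n + 1 - i)"

text \<open>Cm: Cartan entries a_ij = alpha_j(h_i) (1-indexed), n: rank, L: Dynkin labels
  L i = lambda(h_i). A word [j1,...,jm] stands for f_j1 ... f_jm v_lambda in the
  Verma module over the algebra with generators e_i, f_i, h.  eop i w expands
  e_i (w v_lambda) as an integer combination of words, using e_i v = 0 and
  [e_i, f_j] = delta_ij h_i.\<close>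
fun eop :: "(nat \<Rightarrow> nat \<Rightarrow> int) \<Rightarrow> nat \<Rightarrow> (nat \<Rightarrow> int) \<Rightarrow> nat \<Rightarrow> nat list
              \<Rightarrow> (int \<times> nat list) list" where
  "eop Cm n L i [] = []"
| "eop Cm n L i (j # u) =
     map (\<lambda>(c, w). (c, j # w)) (eop Cm n L i u) @
     (if i = j then [(L i - (\<Sum>l = 1..n. Cm i l * int (count_list u l)), u)] else [])"

text \<open>Contravariant (Shapovalov) form: B(v,v) = 1, B(f_i u v, u' v) = B(u v, e_i u' v).\<close>
fun shap :: "(nat \<Rightarrow> nat \<Rightarrow> int) \<Rightarrow> nat \<Rightarrow> (nat \<Rightarrow> int) \<Rightarrow> nat list \<Rightarrow> nat list \<Rightarrow> int" where
  "shap Cm n L [] u' = (if u' = [] then 1 else 0)"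
| "shap Cm n L (i # u) u' = sum_list (map (\<lambda>(c, w). c * shap Cm n L u w) (eop Cm n L i u'))"

text \<open>Words of weight lambda - sum_i k_i alpha_i.\<close>
definition wordsOf :: "nat \<Rightarrow> (nat \<Rightarrow> nat) \<Rightarrow> nat list set" where
  "wordsOf n k = {w. length w = (\<Sum>i = 1..n. k i) \<and> set w \<subseteq> {1..n} \<and>
                     (\<forall>i\<in>{1..n}. count_list w i = k i)}"

text \<open>Dimension of the weight space of weight lambda - sum k_i alpha_i in L(lambda):
  the rank of the Gram matrix of the Shapovalov form on that weight space of the
  Verma module (L(lambda) = Verma module modulo the radical of this form).\<close>
definition wmult :: "(nat \<Rightarrow> nat \<Rightarrow> int) \<Rightarrow> nat \<Rightarrow> (nat \<Rightarrow> int) \<Rightarrow> (nat \<Rightarrow> nat) \<Rightarrow> nat" where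
  "wmult Cm n L k =
     (let ws = (SOME ws. distinct ws \<and> set ws = wordsOf n k);
          m = length ws
      in vec_space.rank m
           (mat m m (\<lambda>(a, b). rat_of_int (shap Cm n L (ws ! a) (ws ! b)))))"

text \<open>Positive root lattice Q_+ (coefficient vectors on nodes 1..n).\<close>
definition Qplus :: "nat \<Rightarrow> (nat \<Rightarrow> nat) set" where
  "Qplus n = {k. \<forall>i. i \<notin> {1..n} \<longrightarrow> k i = 0}"

definition below :: "(nat \<Rightarrow> nat) \<Rightarrow> (nat \<Rightarrow> nat) set" where
  "below g = {k. \<forall>i. k i \<le> g i}"

text \<open>Weight multiplicity of L(lambda) (x) L(mu) at weight lambda + mu - gamma.\<close>
definition tmult :: "(nat \<Rightarrow> nat \<Rightarrow> int) \<Rightarrow> nat \<Rightarrow> (nat \<Rightarrow> int) \<Rightarrow> (nat \<Rightarrow> int) \<Rightarrow> (nat \<Rightarrow> nat) \<Rightarrow> nat" where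
  "tmult Cm n L M g = (\<Sum>k\<in>below g. wmult Cm n L k * wmult Cm n M (\<lambda>i. g i - k i))"

text \<open>Multiplicities c_gamma of L(lambda + mu - gamma) in L(lambda) (x) L(mu): the unique
  family satisfying the character identity ch(L(lambda) (x) L(mu)) =
  sum_gamma c_gamma ch L(lambda + mu - gamma) (complete reducibility of the tensor
  product of integrable highest weight modules of a symmetrizable Kac-Moody algebra).\<close>
definition tcoeff :: "(nat \<Rightarrow> nat \<Rightarrow> int) \<Rightarrow> nat \<Rightarrow> (nat \<Rightarrow> int) \<Rightarrow> (nat \<Rightarrow> int) \<Rightarrow> (nat \<Rightarrow> nat) \<Rightarrow> int" where
  "tcoeff Cm n L M =
     (THE c. (\<forall>g. g \<notin> Qplus n \<longrightarrow> c g = 0) \<and>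
        (\<forall>g\<in>Qplus n. int (tmult Cm n L M g) =
           (\<Sum>g'\<in>below g. c g' * int (wmult Cm n (\<lambda>i. L i + M i - (\<Sum>l = 1..n. Cm i l * int (g' l)))
                                             (\<lambda>i. g i - g' i)))))"

text \<open>c_{lambda mu}^nu(n): multiplicity of L(nu^(n)) in L(lambda^(n)) (x) L(mu^(n)) for
  g(X_n); nu^(n) = lambda^(n) + mu^(n) - gamma with gamma in Q_+.\<close>
definition cmult :: "(nat \<Rightarrow> nat \<Rightarrow> int) \<Rightarrow> nat \<Rightarrow> nat \<Rightarrow>
     (nat \<Rightarrow> int) \<times> (nat \<Rightarrow> int) \<Rightarrow> (nat \<Rightarrow> int) \<times> (nat \<Rightarrow> int) \<Rightarrow> (nat \<Rightarrow> int) \<times> (nat \<Rightarrow> int) \<Rightarrow> int" where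
  "cmult A d n lam mu nu =
     (let Cm = cartanX A d; L = labels n lam; M = labels n mu; N = labels n nu
      in \<Sum>g\<in>{g\<in>Qplus n. \<forall>i\<in>{1..n}. L i + M i - (\<Sum>l = 1..n. Cm i l * int (g l)) = N i}.
           tcoeff Cm n L M g)"

definition acoef :: "(nat \<Rightarrow> nat \<Rightarrow> int) \<Rightarrow> nat \<Rightarrow> nat \<Rightarrow> rat" where
  "acoef A d i =
     (if i \<le> d then rat_of_int (detX A d d) *
        (the (mat_inverse (map_mat rat_of_int (cmat A d d)))) $$ (d - 1, i - 1)
      else rat_of_int (detX A d (i - 1)))"

definition boxes :: "(nat \<Rightarrow> nat \<Rightarrow> int) \<Rightarrow> nat \<Rightarrow> (nat \<Rightarrow> int) \<times> (nat \<Rightarrow> int) \<Rightarrow> rat" where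
  "boxes A d lam =
     (\<Sum>i\<in>{i. fst lam i \<noteq> 0}. acoef A d i * rat_of_int (fst lam i))
     - rat_of_int (Delta A d) * (\<Sum>i\<in>{i. snd lam i \<noteq> 0}. rat_of_nat i * rat_of_int (snd lam i))"

end

theory Submission imports Defs begin


lemma cmat_carrier[simp]: "cmat A d n \<in> carrier_mat n n"
  by (simp add: cmat_def)
lemma cmat_dim[simp]: "dim_row (cmat A d n) = n" "dim_col (cmat A d n) = n"
  by (simp_all add: cmat_def)
lemma cmat_index[simp]: "i < n \<Longrightarrow> j < n \<Longrightarrow> cmat A d n $$ (i,j) = cartanX A d (Suc i) (Suc j)"
  by (simp add: cmat_def)

lemma det_rec:
  assumes "d \<le> k + 1"
  shows "detX A d (k+2) = 2 * detX A d (k+1) - detX A d k"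
proof -
  let ?C = "cmat A d (k+2)"
  have row: "?C $$ (k+1, j) = (if j = k+1 then 2 else if j = k then -1 else 0)" if "j < k+2" for j
    using that assms by (auto simp: cartanX_def)
  have "det ?C = (\<Sum>j<k+2. ?C $$ (k+1,j) * cofactor ?C (k+1) j)"
    by (rule laplace_expansion_row) auto
  also have "\<dots> = (\<Sum>j<k+2. (if j = k+1 then 2 else if j = k then -1 else 0) * cofactor ?C (k+1) j)"
    by (rule sum.cong[OF refl], subst row, auto)
  also have "\<dots> = 2 * cofactor ?C (k+1) (k+1) - cofactor ?C (k+1) k"
    by (simp add: lessThan_Suc)
  finally have e1: "det ?C = 2 * cofactor ?C (k+1) (k+1) - cofactor ?C (k+1) k" .
  have d1: "mat_delete ?C (k+1) (k+1) = cmat A d (k+1)"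
    by (rule eq_matI) (auto simp: mat_delete_def)
  define M where "M = mat_delete ?C (k+1) k"
  have Mc: "M \<in> carrier_mat (k+1) (k+1)" unfolding M_def carrier_mat_def
    by simp
  have colM: "M $$ (i,k) = (if i = k then -1 else 0)" if "i < k+1" for i
  proof -
    have "M $$ (i,k) = cartanX A d (Suc i) (Suc (Suc k))"
      using that unfolding M_def mat_delete_def by simp
    also have "\<dots> = (if i = k then -1 else 0)"
      using that assms unfolding cartanX_def by auto
    finally show ?thesis .
  qed
  have "det M = (\<Sum>i<k+1. M $$ (i,k) * cofactor M i k)"
    by (rule laplace_expansion_column[OF Mc]) auto
  also have "\<dots> = (\<Sum>i<k+1. (if i = k then -1 else 0) * cofactor M i k)"
    by (rule sum.cong[OF refl], subst colM, auto)
  also have "\<dots> = - cofactor M k k"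
    by (simp add: lessThan_Suc)
  finally have e2: "det M = - cofactor M k k" .
  have d2: "mat_delete M k k = cmat A d k"
    by (rule eq_matI) (auto simp: M_def mat_delete_def)
  have "cofactor ?C (k+1) (k+1) = det (cmat A d (k+1))"
    unfolding cofactor_def d1 by simp
  moreover have "cofactor ?C (k+1) k = det (cmat A d k)"
  proof -
    have "cofactor M k k = det (cmat A d k)" unfolding cofactor_def d2 by simp
    then show ?thesis unfolding cofactor_def M_def[symmetric] e2 by simp
  qed
  ultimately show ?thesis
    unfolding detX_def e1 by simp
qed


lemma acoef_props:
  assumes d1: "d \<ge> 1" and D0: "detX A d d \<noteq> 0"
  shows "\<And>j. j \<in> {1..d} \<Longrightarrow> (\<Sum>i=1..d. acoef A d i * of_int (A i j)) = (if j = d then of_int (detX A d d) else 0)"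
    and "acoef A d d = of_int (detX A d (d-1))"
proof -
  define R where "R = map_mat rat_of_int (cmat A d d)"
  have Rc: "R \<in> carrier_mat d d" unfolding R_def by simp
  have detR: "det R = of_int (detX A d d)" unfolding R_def detX_def
    by (simp add: of_int_hom.hom_det)
  have "mat_inverse R \<noteq> None"
  proof
    assume "mat_inverse R = None"
    from mat_inverse(1)[OF Rc this, of "()"] det_non_zero_imp_unit[OF Rc, of "()"] detR D0
    show False by simp
  qed
  then obtain B where MB: "mat_inverse R = Some B" by auto
  from mat_inverse(2)[OF Rc MB] have RB: "R * B = 1\<^sub>m d" and BR: "B * R = 1\<^sub>m d"
    and Bc: "B \<in> carrier_mat d d" by auto
  have ac: "acoef A d i = of_int (detX A d d) * B $$ (d - 1, i - 1)" if "i \<le> d" for i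
    using that unfolding acoef_def R_def[symmetric] MB by simp
  have shift: "(\<Sum>i=1..d. f i) = (\<Sum>l<d. f (Suc l))" for f :: "nat \<Rightarrow> rat"
    by (induct d) (auto simp: lessThan_Suc)
  show "(\<Sum>i=1..d. acoef A d i * of_int (A i j)) = (if j = d then of_int (detX A d d) else 0)"
    if j: "j \<in> {1..d}" for j
  proof -
    have "(\<Sum>i=1..d. acoef A d i * of_int (A i j)) = (\<Sum>l<d. acoef A d (Suc l) * of_int (A (Suc l) j))"
      by (rule shift)
    also have "\<dots> = (\<Sum>l<d. of_int (detX A d d) * (B $$ (d - 1, l) * R $$ (l, j - 1)))"
      by (rule sum.cong[OF refl]) (use j in \<open>auto simp: ac R_def cartanX_def\<close>)
    also have "\<dots> = of_int (detX A d d) * (B * R) $$ (d - 1, j - 1)"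
    proof -
      have dims: "dim_row B = d" "dim_col B = d" "dim_row R = d" "dim_col R = d" using Bc Rc by auto
      have "(B * R) $$ (d - 1, j - 1) = (\<Sum>l<d. B $$ (d - 1, l) * R $$ (l, j - 1))"
        using j d1 by (subst index_mult_mat(1)) (auto simp: dims scalar_prod_def atLeast0LessThan intro!: sum.cong)
      then show ?thesis by (simp add: sum_distrib_left)
    qed
    also have "\<dots> = (if j = d then of_int (detX A d d) else 0)"
      using BR j d1 by (auto split: if_splits)
    finally show ?thesis .
  qed
  have "adj_mat R = adj_mat R * (R * B)" using RB adj_mat(1)[OF Rc] by simp
  also have "\<dots> = (adj_mat R * R) * B" using adj_mat(1)[OF Rc] Rc Bc by simp
  also have "\<dots> = det R \<cdot>\<^sub>m B" using adj_mat(3)[OF Rc] Bc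
    by (simp add: mult_smult_assoc_mat[of _ d d])
  finally have adjB: "adj_mat R = det R \<cdot>\<^sub>m B" .
  have "acoef A d d = adj_mat R $$ (d - 1, d - 1)"
    using ac[of d] adjB detR Bc d1 by simp
  also have "\<dots> = det (mat_delete R (d-1) (d-1))"
    using Rc d1 by (simp add: adj_mat_def cofactor_def)
  also have "mat_delete R (d-1) (d-1) = map_mat rat_of_int (cmat A d (d-1))"
    unfolding R_def by (rule eq_matI) (auto simp: mat_delete_def)
  finally show "acoef A d d = of_int (detX A d (d-1))"
    unfolding detX_def by (simp add: of_int_hom.hom_det)
qed


lemma detX_lin: "detX A d (d + t) = detX A d d + int t * Delta A d"
proof -
  have "detX A d (d + t) = detX A d d + int t * Delta A d \<and>
        detX A d (d + Suc t) = detX A d d + int (Suc t) * Delta A d"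
  proof (induct t)
    case 0
    then show ?case by (simp add: Delta_def)
  next
    case (Suc t)
    have "detX A d (d + t + 2) = 2 * detX A d (d + t + 1) - detX A d (d + t)"
      by (rule det_rec) simp
    then show ?case using Suc by (simp add: algebra_simps)
  qed
  then show ?thesis by simp
qed

lemma acoef_val:
  assumes d1: "d \<ge> 1" and D0: "detX A d d \<noteq> 0" and i: "i \<ge> d"
  shows "acoef A d i = of_int (detX A d d) + of_int (int i - int d - 1) * of_int (Delta A d)"
proof (cases "i = d")
  case True
  have r: "detX A d (d - 1 + 2) = 2 * detX A d (d - 1 + 1) - detX A d (d - 1)"
    by (rule det_rec) simp
  have "d - 1 + 2 = d + 1" "d - 1 + 1 = d" using d1 by auto
  with r have "detX A d (d - 1) = detX A d d - Delta A d"
    by (simp add: Delta_def)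
  then show ?thesis using True acoef_props(2)[OF d1 D0] by simp
next
  case False
  then have i': "i - 1 = d + (i - 1 - d)" using i by simp
  have "acoef A d i = of_int (detX A d (i - 1))" using False i by (simp add: acoef_def)
  also have "\<dots> = of_int (detX A d (d + (i - 1 - d)))" using i' by metis
  also have "\<dots> = of_int (detX A d d) + of_int (int i - int d - 1) * of_int (Delta A d)"
    unfolding detX_lin using False i by (simp add: of_nat_diff)
  finally show ?thesis .
qed


lemma col_claim:
  assumes d1: "d \<ge> 1" and D0: "detX A d d \<noteq> 0"
  shows "j \<in> {1..d + t} \<Longrightarrow> (\<Sum>i=1..d + t. acoef A d i * of_int (cartanX A d i j)) =
     (if j = d + t then of_int (detX A d d) + of_nat t * of_int (Delta A d) else 0)"
proof (induct t arbitrary: j)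
  case 0
  then have j: "j \<in> {1..d}" by simp
  have "(\<Sum>i=1..d. acoef A d i * of_int (cartanX A d i j)) = (\<Sum>i=1..d. acoef A d i * of_int (A i j))"
    by (rule sum.cong[OF refl]) (use j in \<open>auto simp: cartanX_def\<close>)
  also have "\<dots> = (if j = d then of_int (detX A d d) else 0)"
    by (rule acoef_props(1)[OF d1 D0 j])
  finally show ?case by simp
next
  case (Suc t)
  let ?n = "d + t"
  have aS: "acoef A d (Suc ?n) = of_int (detX A d d) + of_nat t * of_int (Delta A d)"
    using acoef_val[OF d1 D0, of "Suc ?n"] by simp
  have an: "acoef A d ?n = of_int (detX A d d) + (of_nat t - 1) * of_int (Delta A d)"
    using acoef_val[OF d1 D0, of "?n"] by simp
  have split: "(\<Sum>i=1..d + Suc t. f i) = (\<Sum>i=1..?n. f i) + f (Suc ?n)" for f :: "nat \<Rightarrow> rat"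
    by simp
  show ?case
  proof (cases "j \<le> ?n")
    case True
    have IH: "(\<Sum>i=1..?n. acoef A d i * of_int (cartanX A d i j)) =
      (if j = ?n then of_int (detX A d d) + of_nat t * of_int (Delta A d) else 0)"
      using Suc True by auto
    have c: "cartanX A d (Suc ?n) j = (if j = ?n then -1 else 0)"
      using True d1 by (auto simp: cartanX_def)
    show ?thesis unfolding split IH c aS using True by auto
  next
    case False
    then have jj: "j = Suc ?n" using Suc by auto
    have "(\<Sum>i=1..?n. acoef A d i * of_int (cartanX A d i j)) = (\<Sum>i=1..?n. if i = ?n then - acoef A d i else 0)"
      by (rule sum.cong[OF refl]) (use jj d1 in \<open>auto simp: cartanX_def\<close>)
    also have "\<dots> = - acoef A d ?n" using d1 by simp
    finally have s: "(\<Sum>i=1..?n. acoef A d i * of_int (cartanX A d i j)) = - acoef A d ?n" .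
    have c: "cartanX A d (Suc ?n) j = 2" using jj d1 by (simp add: cartanX_def)
    show ?thesis unfolding split s c aS an using jj by (simp add: algebra_simps)
  qed
qed


lemma len1_ge: assumes "x \<in> H1" "x i \<noteq> 0" shows "i \<le> len1 x"
proof -
  have "finite (insert 0 {i. x i \<noteq> 0})" using assms(1) by (simp add: H1_def)
  then show ?thesis unfolding len1_def using assms(2) by (intro Max_ge) auto
qed

lemma boxes_range:
  assumes lam: "lam \<in> H2pos" and n: "n > lenX d lam"
  shows "boxes A d lam = (\<Sum>i=1..n. acoef A d i * of_int (fst lam i))
     - of_int (Delta A d) * (\<Sum>i=1..n. of_nat i * of_int (snd lam i))"
proof -
  have h1: "fst lam \<in> H1" "snd lam \<in> H1" using lam by (auto simp: H2pos_def H1pos_def)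
  have s1: "{i. fst lam i \<noteq> 0} \<subseteq> {1..n}"
  proof
    fix i assume "i \<in> {i. fst lam i \<noteq> 0}"
    then have ne: "fst lam i \<noteq> 0" by simp
    have z: "fst lam 0 = 0" using h1(1) by (simp add: H1_def)
    have "i \<noteq> 0" using ne z by (cases i) auto
    moreover have "i \<le> len1 (fst lam)" using len1_ge[OF h1(1) ne] .
    ultimately have "i \<noteq> 0" "i \<le> len1 (fst lam)" by auto
    then show "i \<in> {1..n}" using n unfolding lenX_def by auto
  qed
  have s2: "{i. snd lam i \<noteq> 0} \<subseteq> {1..n}"
  proof
    fix i assume "i \<in> {i. snd lam i \<noteq> 0}"
    then have ne: "snd lam i \<noteq> 0" by simp
    have z: "snd lam 0 = 0" using h1(2) by (simp add: H1_def)
    have "i \<noteq> 0" using ne z by (cases i) auto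
    moreover have "i \<le> len1 (snd lam)" using len1_ge[OF h1(2) ne] .
    ultimately have "i \<noteq> 0" "i \<le> len1 (snd lam)" by auto
    then show "i \<in> {1..n}" using n unfolding lenX_def by auto
  qed
  have e1: "(\<Sum>i\<in>{i. fst lam i \<noteq> 0}. acoef A d i * of_int (fst lam i)) = (\<Sum>i=1..n. acoef A d i * of_int (fst lam i))"
    by (rule sum.mono_neutral_left) (use s1 in auto)
  have e2: "(\<Sum>i\<in>{i. snd lam i \<noteq> 0}. rat_of_nat i * of_int (snd lam i)) = (\<Sum>i=1..n. of_nat i * of_int (snd lam i))"
    by (rule sum.mono_neutral_left) (use s2 in auto)
  show ?thesis unfolding boxes_def e1 e2 ..
qed

lemma key:
  assumes ext: "extensible A d"
    and lam: "lam \<in> H2pos" and mu: "mu \<in> H2pos" and nu: "nu \<in> H2pos"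
    and nl: "n > lenX d lam" and nm: "n > lenX d mu" and nn: "n > lenX d nu"
    and c: "cmult A d n lam mu nu > 0"
  shows "\<exists>m::int. boxes A d lam + boxes A d mu - boxes A d nu =
           (of_int (detX A d d) + of_nat (n - d) * of_int (Delta A d)) * of_int m"
proof -
  from ext have d1: "d \<ge> 1" and D0: "detX A d d \<noteq> 0"
    by (auto simp: extensible_def marked_dynkin_def)
  define x where "x i = fst lam i + fst mu i - fst nu i" for i
  define y where "y i = snd lam i + snd mu i - snd nu i" for i
  define E where "E = rat_of_int (detX A d d) + of_nat (n - d) * of_int (Delta A d)"
  define Dl where "Dl = rat_of_int (Delta A d)"
  define a where "a i = acoef A d i" for i
  have nd: "n \<ge> d" using nl by (simp add: lenX_def)
  let ?G = "{g\<in>Qplus n. \<forall>i\<in>{1..n}. labels n lam i + labels n mu i - (\<Sum>l = 1..n. cartanX A d i l * int (g l)) = labels n nu i}"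
  have "?G \<noteq> {}"
  proof
    assume "?G = {}"
    then have "cmult A d n lam mu nu = 0" unfolding cmult_def Let_def by (simp only: sum.empty)
    with c show False by simp
  qed
  then obtain g where g: "\<forall>i\<in>{1..n}. labels n lam i + labels n mu i - (\<Sum>l = 1..n. cartanX A d i l * int (g l)) = labels n nu i"
    by blast
  have b: "rat_of_int (x i + y (n + 1 - i)) = (\<Sum>l=1..n. of_int (cartanX A d i l) * of_nat (g l))"
    if "i \<in> {1..n}" for i
  proof -
    have "x i + y (n + 1 - i) = (\<Sum>l = 1..n. cartanX A d i l * int (g l))"
      using g that unfolding x_def y_def labels_def by fastforce
    then show ?thesis by simp
  qed
  have col: "(\<Sum>i=1..n. a i * of_int (cartanX A d i l)) = (if l = n then E else 0)" if "l \<in> {1..n}" for l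
    using col_claim[OF d1 D0, of l "n - d"] that nd unfolding a_def E_def by simp
  have S1: "(\<Sum>i=1..n. a i * of_int (x i + y (n + 1 - i))) = E * of_nat (g n)"
  proof -
    have "(\<Sum>i=1..n. a i * of_int (x i + y (n + 1 - i))) =
        (\<Sum>i=1..n. \<Sum>l=1..n. a i * of_int (cartanX A d i l) * of_nat (g l))"
    proof (rule sum.cong[OF refl])
      fix i assume i: "i \<in> {1..n}"
      show "a i * of_int (x i + y (n + 1 - i)) = (\<Sum>l=1..n. a i * of_int (cartanX A d i l) * of_nat (g l))"
        by (subst b[OF i]) (simp add: sum_distrib_left mult.assoc)
    qed
    also have "\<dots> = (\<Sum>l=1..n. \<Sum>i=1..n. a i * of_int (cartanX A d i l) * of_nat (g l))"
      by (rule sum.swap)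
    also have "\<dots> = (\<Sum>l=1..n. (if l = n then E else 0) * of_nat (g l))"
    proof (rule sum.cong[OF refl])
      fix l assume l: "l \<in> {1..n}"
      show "(\<Sum>i=1..n. a i * of_int (cartanX A d i l) * of_nat (g l)) = (if l = n then E else 0) * of_nat (g l)"
        by (subst col[OF l, symmetric]) (simp add: sum_distrib_right)
    qed
    also have "\<dots> = (\<Sum>l=1..n. if l = n then E * of_nat (g l) else 0)"
      by (rule sum.cong[OF refl]) simp
    also have "\<dots> = E * of_nat (g n)" using nd d1 by (subst sum.delta) auto
    finally show ?thesis .
  qed
  have ly: "k + d < n" if "y k \<noteq> 0" for k
  proof -
    have h: "snd lam \<in> H1" "snd mu \<in> H1" "snd nu \<in> H1" using lam mu nu by (auto simp: H2pos_def H1pos_def)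
    from that have "snd lam k \<noteq> 0 \<or> snd mu k \<noteq> 0 \<or> snd nu k \<noteq> 0" unfolding y_def by auto
    then show ?thesis using len1_ge[OF h(1)] len1_ge[OF h(2)] len1_ge[OF h(3)] nl nm nn
      unfolding lenX_def by fastforce
  qed
  have S2: "(\<Sum>i=1..n. a i * of_int (y (n + 1 - i))) =
      E * (\<Sum>k=1..n. of_int (y k)) - Dl * (\<Sum>k=1..n. of_nat k * of_int (y k))"
  proof -
    have "(\<Sum>i=1..n. a i * of_int (y (n + 1 - i))) = (\<Sum>k=1..n. a (n + 1 - k) * of_int (y k))"
      by (rule sum.reindex_bij_witness[of _ "\<lambda>k. n + 1 - k" "\<lambda>i. n + 1 - i"]) auto
    also have "\<dots> = (\<Sum>k=1..n. E * of_int (y k) - Dl * (of_nat k * of_int (y k)))"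
    proof (rule sum.cong[OF refl])
      fix k assume k: "k \<in> {1..n}"
      show "a (n + 1 - k) * of_int (y k) = E * of_int (y k) - Dl * (of_nat k * of_int (y k))"
      proof (cases "y k = 0")
        case False
        then have kd: "k + d < n" by (rule ly)
        have "a (n + 1 - k) = of_int (detX A d d) + of_int (int (n + 1 - k) - int d - 1) * Dl"
          unfolding a_def Dl_def by (rule acoef_val[OF d1 D0]) (use kd in auto)
        also have "\<dots> = E - Dl * of_nat k"
          using kd unfolding E_def Dl_def by (simp add: of_nat_diff algebra_simps)
        finally have ak: "a (n + 1 - k) = E - Dl * of_nat k" .
        show ?thesis unfolding ak by (simp add: algebra_simps)
      qed simp
    qed
    also have "\<dots> = E * (\<Sum>k=1..n. of_int (y k)) - Dl * (\<Sum>k=1..n. of_nat k * of_int (y k))"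
      by (simp add: sum_subtractf sum_distrib_left)
    finally show ?thesis .
  qed
  have S3: "(\<Sum>i=1..n. a i * of_int (x i + y (n + 1 - i))) =
      (\<Sum>i=1..n. a i * of_int (x i)) + (\<Sum>i=1..n. a i * of_int (y (n + 1 - i)))"
    by (simp add: distrib_left sum.distrib)
  have BX: "boxes A d lam + boxes A d mu - boxes A d nu =
      (\<Sum>i=1..n. a i * of_int (x i)) - Dl * (\<Sum>k=1..n. of_nat k * of_int (y k))"
    unfolding boxes_range[OF lam nl] boxes_range[OF mu nm] boxes_range[OF nu nn] x_def y_def a_def Dl_def
    by (simp add: algebra_simps sum.distrib sum_subtractf sum_distrib_left)
  have "boxes A d lam + boxes A d mu - boxes A d nu = E * (of_nat (g n) - (\<Sum>k=1..n. of_int (y k)))"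
    using BX S1 S2 S3 by (simp add: algebra_simps)
  then show ?thesis unfolding E_def
    by (intro exI[of _ "int (g n) - (\<Sum>k=1..n. y k)"]) simp
qed


theorem proposition3p13:
  fixes A :: "nat \<Rightarrow> nat \<Rightarrow> int" and d :: nat
    and lam mu nu :: "(nat \<Rightarrow> int) \<times> (nat \<Rightarrow> int)"
  assumes "extensible A d"
    and "lam \<in> H2pos" and "mu \<in> H2pos" and "nu \<in> H2pos"
    and "infinite {n. n > lenX d lam \<and> n > lenX d mu \<and> n > lenX d nu \<and>
                      cmult A d n lam mu nu > 0}"
  shows "boxes A d lam + boxes A d mu = boxes A d nu"
proof (rule ccontr)
  assume ne: "\<not> ?thesis"
  define Bx where "Bx = boxes A d lam + boxes A d mu - boxes A d nu"
  have Bx0: "Bx \<noteq> 0" using ne unfolding Bx_def by simp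
  from assms(1) have Dl0: "Delta A d \<noteq> 0" by (simp add: extensible_def)
  define D where "D = rat_of_int (detX A d d)"
  define Dl where "Dl = rat_of_int (Delta A d)"
  have Dl1: "\<bar>Dl\<bar> \<ge> 1" unfolding Dl_def using Dl0
    by (metis of_int_1_le_iff of_int_abs zero_less_abs_iff int_one_le_iff_zero_less)
  define N where "N = d + nat \<lceil>\<bar>Bx\<bar> + \<bar>D\<bar>\<rceil>"
  from assms(5) obtain n where n: "n > N" and
    nS: "n > lenX d lam \<and> n > lenX d mu \<and> n > lenX d nu \<and> cmult A d n lam mu nu > 0"
    unfolding infinite_nat_iff_unbounded by blast
  from key[OF assms(1-4)] nS obtain m :: int where
    m: "Bx = (D + of_nat (n - d) * Dl) * of_int m" unfolding Bx_def D_def Dl_def by blast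
  have m0: "m \<noteq> 0" using m Bx0 by auto
  have nd: "n \<ge> d" using n unfolding N_def by simp
  have big: "of_nat (n - d) > \<bar>Bx\<bar> + \<bar>D\<bar>"
  proof -
    have "n - d > nat \<lceil>\<bar>Bx\<bar> + \<bar>D\<bar>\<rceil>" using n unfolding N_def by simp
    then have "of_nat (n - d) > (of_int \<lceil>\<bar>Bx\<bar> + \<bar>D\<bar>\<rceil> :: rat)"
      by linarith
    then show ?thesis by linarith
  qed
  have "\<bar>D + of_nat (n - d) * Dl\<bar> \<ge> of_nat (n - d) * \<bar>Dl\<bar> - \<bar>D\<bar>"
    by (simp add: abs_mult)
  moreover have "of_nat (n - d) * \<bar>Dl\<bar> \<ge> (of_nat (n - d) :: rat)"
    using Dl1 by (simp add: mult_le_cancel_left1)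
  ultimately have E: "\<bar>D + of_nat (n - d) * Dl\<bar> > \<bar>Bx\<bar>" using big by linarith
  have "\<bar>of_int m :: rat\<bar> \<ge> 1" using m0 by linarith
  then have "\<bar>Bx\<bar> \<ge> \<bar>D + of_nat (n - d) * Dl\<bar>"
    unfolding m abs_mult by (simp add: mult_le_cancel_left1)
  with E show False by linarith
qed

end
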